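(* Let $(X,\leqslant)$ be a finite partially ordered set with a maximum element, $U$ a finite set of users and $\lambda\colon U\to X$. Then among the spanning out-trees of $H^*=(X,E_0^* )$ that have minimum weight with respect to $\omega$, there exists one, $T=(X,E)$, with $E\subseteq E_0$.
   Context: $E_0=\{xy: x,y\in X,\ y\lessdot x\}$ is the arc set of the Hasse diagram, where $y\lessdot x$ means $y<x$ and there is no $z$ with $y<z<x$. $E_0^*=\{xy:x,y\in X,\ x>y\}$. A spanning out-tree of $H^*$ is a subgraph with vertex set $X$ that is a rooted tree with arcs oriented away from the root; its weight is the sum of its arc weights. $U(x)=\{u\in U:\lambda(u)=x\}$; for $yz\in E_0^*$, $\gamma(yz)=\{x\in X:x\geqslant z,\ x\not\geqslant y\}$ and $\omega(yz)=\sum_{x\in\gamma(yz)}|U(x)|$. *)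

theory Defs
  imports Main
begin

text \<open>The poset (X, \<le>) is a finite set X of elements of a type with a partial order.
  Arcs are pairs (x, y), meaning the arc from x to y.\<close>

definition covers :: "'a::order set \<Rightarrow> 'a \<Rightarrow> 'a \<Rightarrow> bool" where
  "covers X y x \<longleftrightarrow> y < x \<and> \<not> (\<exists>z\<in>X. y < z \<and> z < x)"

definition E0 :: "'a::order set \<Rightarrow> ('a \<times> 'a) set" where
  "E0 X = {(x, y). x \<in> X \<and> y \<in> X \<and> covers X y x}"

definition E0star :: "'a::order set \<Rightarrow> ('a \<times> 'a) set" where
  "E0star X = {(x, y). x \<in> X \<and> y \<in> X \<and> x > y}"

definition users_at :: "'u set \<Rightarrow> ('u \<Rightarrow> 'a) \<Rightarrow> 'a \<Rightarrow> 'u set" where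
  "users_at U lam x = {u \<in> U. lam u = x}"

definition gamma :: "'a::order set \<Rightarrow> 'a \<times> 'a \<Rightarrow> 'a set" where
  "gamma X e = (case e of (y, z) \<Rightarrow> {x \<in> X. x \<ge> z \<and> \<not> x \<ge> y})"

definition omega :: "'a::order set \<Rightarrow> 'u set \<Rightarrow> ('u \<Rightarrow> 'a) \<Rightarrow> 'a \<times> 'a \<Rightarrow> nat" where
  "omega X U lam e = (\<Sum>x\<in>gamma X e. card (users_at U lam x))"

definition out_tree :: "'a set \<Rightarrow> ('a \<times> 'a) set \<Rightarrow> 'a \<Rightarrow> bool" where
  "out_tree V E r \<longleftrightarrow> E \<subseteq> V \<times> V \<and> r \<in> V \<and>
     {u. (u, r) \<in> E} = {} \<and>
     (\<forall>v\<in>V. v \<noteq> r \<longrightarrow> card {u. (u, v) \<in> E} = 1) \<and>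
     (\<forall>v\<in>V. (r, v) \<in> E\<^sup>*)"

definition spanning_out_tree :: "'a set \<Rightarrow> ('a \<times> 'a) set \<Rightarrow> ('a \<times> 'a) set \<Rightarrow> bool" where
  "spanning_out_tree V A E \<longleftrightarrow> E \<subseteq> A \<and> (\<exists>r. out_tree V E r)"

definition tree_weight :: "('a \<times> 'a \<Rightarrow> nat) \<Rightarrow> ('a \<times> 'a) set \<Rightarrow> nat" where
  "tree_weight w E = (\<Sum>e\<in>E. w e)"

end

theory Submission
  imports Defs
begin

lemma omega_mono:
  assumes "finite X" "c \<le> u"
  shows "omega X U lam (c, v) \<le> omega X U lam (u, v)"
proof -
  have "gamma X (c, v) \<subseteq> gamma X (u, v)"
    using assms(2) by (auto simp: gamma_def intro: order_trans)
  moreover have "finite (gamma X (u, v))" using assms(1) by (simp add: gamma_def)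
  ultimately show ?thesis unfolding omega_def by (intro sum_mono2) auto
qed

lemma cover_below:
  assumes "finite X" "u \<in> X" "v < u"
  shows "\<exists>c\<in>X. covers X v c \<and> c \<le> u"
proof -
  obtain b where b: "b \<in> {x\<in>X. v < x}" "b \<le> u"
    "\<forall>z \<in> {x\<in>X. v < x}. z \<le> b \<longrightarrow> b = z"
    using finite_has_minimal2[of "{x\<in>X. v < x}" u] assms by auto
  have "covers X v b" unfolding covers_def using b by (auto simp: less_le_not_le)
  thus ?thesis using b by auto
qed

lemma best_cover:
  assumes "finite X" "u0 \<in> X" "v < u0"
  shows "\<exists>c. c \<in> X \<and> c > v \<and> (\<forall>u\<in>X. u > v \<longrightarrow> omega X U lam (c, v) \<le> omega X U lam (u, v))"
proof -
  let ?C = "{c\<in>X. covers X v c}"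
  let ?f = "\<lambda>c. omega X U lam (c, v)"
  have fin: "finite ?C" using assms by auto
  have ne: "?C \<noteq> {}" using cover_below[OF assms] by auto
  have "Min (?f ` ?C) \<in> ?f ` ?C" using fin ne by (intro Min_in) auto
  then obtain c where c: "c \<in> ?C" "?f c = Min (?f ` ?C)" by auto
  have "\<forall>u\<in>X. u > v \<longrightarrow> ?f c \<le> ?f u"
  proof (intro ballI impI)
    fix u assume "u \<in> X" "u > v"
    then obtain c' where c': "c' \<in> X" "covers X v c'" "c' \<le> u"
      using cover_below[OF assms(1)] by blast
    have "?f c \<le> ?f c'" using c c' fin by (simp add: Min_le)
    also have "\<dots> \<le> ?f u" using omega_mono[OF assms(1) c'(3)] .
    finally show "?f c \<le> ?f u" .
  qed
  thus ?thesis using c by (auto simp: covers_def)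
qed

theorem corollary4:
  fixes X :: "'a::order set" and U :: "'u set" and lam :: "'u \<Rightarrow> 'a"
  assumes "finite X"
    and "\<exists>m\<in>X. \<forall>x\<in>X. x \<le> m"
    and "finite U"
    and "\<forall>u\<in>U. lam u \<in> X"
  shows "\<exists>E. spanning_out_tree X (E0star X) E
            \<and> (\<forall>E'. spanning_out_tree X (E0star X) E' \<longrightarrow>
                   tree_weight (omega X U lam) E \<le> tree_weight (omega X U lam) E')
            \<and> E \<subseteq> E0 X"
proof -
  obtain m where m: "m \<in> X" "\<forall>x\<in>X. x \<le> m" using assms(2) by blast
  let ?w = "omega X U lam"
  have "\<forall>v\<in>X - {m}. \<exists>c. c \<in> X \<and> covers X v c \<and>
          (\<forall>u\<in>X. u > v \<longrightarrow> ?w (c, v) \<le> ?w (u, v))"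
  proof
    fix v assume v: "v \<in> X - {m}"
    hence vm: "v < m" using m by (auto simp: less_le)
    obtain c where c: "c \<in> X" "c > v" "\<forall>u\<in>X. u > v \<longrightarrow> ?w (c, v) \<le> ?w (u, v)"
      using best_cover[OF assms(1) m(1) vm, of U lam] by blast
    obtain c' where c': "c' \<in> X" "covers X v c'" "c' \<le> c"
      using cover_below[OF assms(1) c(1) c(2)] by blast
    have "\<forall>u\<in>X. u > v \<longrightarrow> ?w (c', v) \<le> ?w (u, v)"
      using c(3) omega_mono[OF assms(1) c'(3), of U lam v] by (meson order_trans)
    thus "\<exists>c. c \<in> X \<and> covers X v c \<and> (\<forall>u\<in>X. u > v \<longrightarrow> ?w (c, v) \<le> ?w (u, v))"
      using c' by blast
  qed
  then obtain p where p: "\<And>v. v \<in> X - {m} \<Longrightarrow> p v \<in> X \<and> covers X v (p v) \<and>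
          (\<forall>u\<in>X. u > v \<longrightarrow> ?w (p v, v) \<le> ?w (u, v))"
    by metis
  define E where "E = (\<lambda>v. (p v, v)) ` (X - {m})"
  have pgt: "v \<in> X - {m} \<Longrightarrow> p v > v" for v using p by (simp add: covers_def)
  have EE0: "E \<subseteq> E0 X" using p by (auto simp: E_def E0_def)
  have reach1: "v \<in> X \<Longrightarrow> (m, v) \<in> E\<^sup>*" for v
  proof (induction "card {x\<in>X. x > v}" arbitrary: v rule: less_induct)
    case less
    show ?case
    proof (cases "v = m")
      case True
      thus ?thesis by simp
    next
      case False
      hence True: "v \<in> X - {m}" using less.prems by simp
      have "{x\<in>X. x > p v} \<subset> {x\<in>X. x > v}"
        using pgt[OF True] p[OF True] by (auto intro: less_trans)
      hence "card {x\<in>X. x > p v} < card {x\<in>X. x > v}"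
        using assms(1) by (intro psubset_card_mono) auto
      hence "(m, p v) \<in> E\<^sup>*" using less.hyps p[OF True] by blast
      moreover have "(p v, v) \<in> E" using True by (auto simp: E_def)
      ultimately show ?thesis by auto
    qed
  qed
  have inc: "v \<in> X - {m} \<Longrightarrow> {u. (u, v) \<in> E} = {p v}" for v
    by (auto simp: E_def)
  have span: "spanning_out_tree X (E0star X) E"
    unfolding spanning_out_tree_def
  proof
    show "E \<subseteq> E0star X" using EE0 by (auto simp: E0_def E0star_def covers_def)
    have "out_tree X E m"
      unfolding out_tree_def using p m reach1 inc by (auto simp: E_def)
    thus "\<exists>r. out_tree X E r" by blast
  qed
  have wE: "tree_weight ?w E = (\<Sum>v\<in>X - {m}. ?w (p v, v))"
    unfolding tree_weight_def E_def by (subst sum.reindex) (auto simp: inj_on_def)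
  have minimal: "tree_weight ?w E \<le> tree_weight ?w E'"
    if E': "spanning_out_tree X (E0star X) E'" for E'
  proof -
    obtain r where r: "out_tree X E' r" and sub: "E' \<subseteq> E0star X"
      using E' by (auto simp: spanning_out_tree_def)
    have rm: "r = m"
    proof (rule ccontr)
      assume "r \<noteq> m"
      hence "card {u. (u, m) \<in> E'} = 1" using r m by (auto simp: out_tree_def)
      then obtain a where "{u. (u, m) \<in> E'} = {a}" by (rule card_1_singletonE)
      hence "(a, m) \<in> E'" by auto
      hence "a \<in> X" "a > m" using sub by (auto simp: E0star_def)
      thus False using m by (auto simp: less_le_not_le)
    qed
    define q where "q v = (THE u. (u, v) \<in> E')" for v
    have qv: "v \<in> X - {m} \<Longrightarrow> {u. (u, v) \<in> E'} = {q v}" for v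
    proof -
      assume v: "v \<in> X - {m}"
      hence "card {u. (u, v) \<in> E'} = 1" using r rm by (auto simp: out_tree_def)
      then obtain a where a: "{u. (u, v) \<in> E'} = {a}" by (rule card_1_singletonE)
      hence "q v = a" unfolding q_def by (metis (mono_tags) mem_Collect_eq singletonD singletonI the_equality)
      thus ?thesis using a by simp
    qed
    have E'eq: "E' = (\<lambda>v. (q v, v)) ` (X - {m})"
    proof
      show "E' \<subseteq> (\<lambda>v. (q v, v)) ` (X - {m})"
      proof
        fix e assume e: "e \<in> E'"
        obtain a b where ab: "e = (a, b)" by force
        have bX: "b \<in> X" using e ab r by (auto simp: out_tree_def)
        have "b \<noteq> m" using e ab r rm by (auto simp: out_tree_def)
        hence bm: "b \<in> X - {m}" using bX by simp
        moreover have "a = q b" using qv[OF bm] e ab by auto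
        ultimately show "e \<in> (\<lambda>v. (q v, v)) ` (X - {m})" using ab by auto
      qed
      show "(\<lambda>v. (q v, v)) ` (X - {m}) \<subseteq> E'" using qv by auto
    qed
    have wE': "tree_weight ?w E' = (\<Sum>v\<in>X - {m}. ?w (q v, v))"
      unfolding tree_weight_def E'eq by (subst sum.reindex) (auto simp: inj_on_def)
    have "(\<Sum>v\<in>X - {m}. ?w (p v, v)) \<le> (\<Sum>v\<in>X - {m}. ?w (q v, v))"
    proof (rule sum_mono)
      fix v assume v: "v \<in> X - {m}"
      have "(q v, v) \<in> E'" using qv[OF v] by auto
      hence "q v \<in> X" "q v > v" using sub by (auto simp: E0star_def)
      thus "?w (p v, v) \<le> ?w (q v, v)" using p[OF v] by blast
    qed
    thus ?thesis using wE wE' by simp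
  qed
  show ?thesis using span minimal EE0 by blast
qed

end
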